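(* Let $a,b\in K$. Then: (1) The skew rational function $(T-b)^{-1}$ is defined at $a$ if and only if $b\notin\Delta(a)$ and, for every $c\in\Delta(a)$, the equation $\sigma(x)c+\delta(x)-bx=1$ has a solution $x\in K$. (2) If $(T-b)^{-1}$ is defined at $a$, then its value at $a$ is the unique solution $x\in K$ of $\sigma(x)a+\delta(x)-bx=1$.
   Context: Let $K$ be a skew field, $K^*=K\setminus\{0\}$, $\sigma\colon K\to K$ a ring endomorphism and $\delta\colon K\to K$ a $\sigma$-derivation ($\delta$ additive, $\delta(ab)=\sigma(a)\delta(b)+\delta(a)b$). $K[T;\sigma,\delta]$ is the skew polynomial ring with $Ta=\sigma(a)T+\delta(a)$. The $(\sigma,\delta)$-action of $K^*$ on $K$ is ${}^{b}a=\sigma(b)ab^{-1}+\delta(b)b^{-1}$; $\Delta(a)=\{{}^{b}a:b\in K^*\}$ is the $(\sigma,\delta)$-conjugacy class of $a$. For $P\in K[T;\sigma,\delta]$ and $a\in K$, $P(a)$ is the unique element of $K$ with $P(T)-P(a)\in K[T;\sigma,\delta](T-a)$. For a nonempty set $Z$ with a $K^*$-action, functions $Z\to K$ are added pointwise and the skew product is $(f\diamond g)(z)=f({}^{g(z)}z)g(z)$ if $g(z)\neq0$, $0$ otherwise; $f$ is skew invertible if some $g$ satisfies $f\diamond g=g\diamond f=1$, and $g=f^{\langle-1\rangle}$. For an invariant set $A\subseteq K$, $P$ gives the function $A\to K$, $c\mapsto P(c)$. $K(T;\sigma,\delta)$ is the division ring of left fractions of the left Ore domain $K[T;\sigma,\delta]$;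 each $f$ has a unique minimal representation $f=P(T)^{-1}Q(T)$ with $P$ monic of least degree. $f$ is defined at $a$ if $P\colon\Delta(a)\to K$ is skew invertible, and then $f(a)=(P^{\langle-1\rangle}\diamond Q)(a)$ with $P^{\langle-1\rangle}$ the skew inverse on $\Delta(a)$. *)

theory Defs
  imports Main
begin

definition ring_endo :: "('a::division_ring \<Rightarrow> 'a) \<Rightarrow> bool" where
  "ring_endo \<sigma> \<longleftrightarrow> (\<forall>x y. \<sigma> (x + y) = \<sigma> x + \<sigma> y) \<and> (\<forall>x y. \<sigma> (x * y) = \<sigma> x * \<sigma> y) \<and> \<sigma> 1 = 1"

definition sigma_derivation :: "('a::division_ring \<Rightarrow> 'a) \<Rightarrow> ('a \<Rightarrow> 'a) \<Rightarrow> bool" where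
  "sigma_derivation \<sigma> \<delta> \<longleftrightarrow> (\<forall>x y. \<delta> (x + y) = \<delta> x + \<delta> y) \<and>
     (\<forall>x y. \<delta> (x * y) = \<sigma> x * \<delta> y + \<delta> x * y)"

text \<open>Skew polynomials in K[T;sigma,delta]: finitely supported coefficient
sequences, p = sum of (p i) T^i with coefficients on the left.\<close>

definition is_spoly :: "(nat \<Rightarrow> 'a::zero) \<Rightarrow> bool" where
  "is_spoly p \<longleftrightarrow> finite {i. p i \<noteq> 0}"

definition spdeg :: "(nat \<Rightarrow> 'a::zero) \<Rightarrow> nat" where
  "spdeg p = (if (\<forall>i. p i = 0) then 0 else Max {i. p i \<noteq> 0})"

definition spmonic :: "(nat \<Rightarrow> 'a::{zero,one}) \<Rightarrow> bool" where
  "spmonic p \<longleftrightarrow> p (spdeg p) = 1"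

definition spconst :: "'a::zero \<Rightarrow> nat \<Rightarrow> 'a" where
  "spconst c = (\<lambda>j. if j = 0 then c else 0)"

definition spTminus :: "'a::ring_1 \<Rightarrow> nat \<Rightarrow> 'a" where
  "spTminus a = (\<lambda>j. if j = 1 then 1 else if j = 0 then - a else 0)"

text \<open>Left multiplication by T, using T c = sigma(c) T + delta(c).\<close>
definition spTmul :: "('a::division_ring \<Rightarrow> 'a) \<Rightarrow> ('a \<Rightarrow> 'a) \<Rightarrow> (nat \<Rightarrow> 'a) \<Rightarrow> nat \<Rightarrow> 'a" where
  "spTmul \<sigma> \<delta> q = (\<lambda>j. (if j = 0 then 0 else \<sigma> (q (j - 1))) + \<delta> (q j))"

definition spmul :: "('a::division_ring \<Rightarrow> 'a) \<Rightarrow> ('a \<Rightarrow> 'a) \<Rightarrow> (nat \<Rightarrow> 'a) \<Rightarrow> (nat \<Rightarrow> 'a) \<Rightarrow> nat \<Rightarrow> 'a" where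
  "spmul \<sigma> \<delta> p q = (\<lambda>j. \<Sum>i\<in>{i. p i \<noteq> 0}. p i * ((spTmul \<sigma> \<delta> ^^ i) q) j)"

definition speval :: "('a::division_ring \<Rightarrow> 'a) \<Rightarrow> ('a \<Rightarrow> 'a) \<Rightarrow> (nat \<Rightarrow> 'a) \<Rightarrow> 'a \<Rightarrow> 'a" where
  "speval \<sigma> \<delta> P a = (THE r. \<exists>Q. is_spoly Q \<and> (\<lambda>j. P j - spconst r j) = spmul \<sigma> \<delta> Q (spTminus a))"

definition sd_act :: "('a::division_ring \<Rightarrow> 'a) \<Rightarrow> ('a \<Rightarrow> 'a) \<Rightarrow> 'a \<Rightarrow> 'a \<Rightarrow> 'a" where
  "sd_act \<sigma> \<delta> b a = \<sigma> b * a * inverse b + \<delta> b * inverse b"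

definition sd_class :: "('a::division_ring \<Rightarrow> 'a) \<Rightarrow> ('a \<Rightarrow> 'a) \<Rightarrow> 'a \<Rightarrow> 'a set" where
  "sd_class \<sigma> \<delta> a = {sd_act \<sigma> \<delta> b a | b. b \<noteq> 0}"

text \<open>Skew product of functions Z -> K for Z = an invariant subset of K
(functions are represented by total functions; only values on Z matter).\<close>
definition skew_prod :: "('a::division_ring \<Rightarrow> 'a) \<Rightarrow> ('a \<Rightarrow> 'a) \<Rightarrow> ('a \<Rightarrow> 'a) \<Rightarrow> ('a \<Rightarrow> 'a) \<Rightarrow> 'a \<Rightarrow> 'a" where
  "skew_prod \<sigma> \<delta> f g z = (if g z \<noteq> 0 then f (sd_act \<sigma> \<delta> (g z) z) * g z else 0)"

definition skew_inverse_on :: "('a::division_ring \<Rightarrow> 'a) \<Rightarrow> ('a \<Rightarrow> 'a) \<Rightarrow> 'a set \<Rightarrow> ('a \<Rightarrow> 'a) \<Rightarrow> ('a \<Rightarrow> 'a) \<Rightarrow> bool" where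
  "skew_inverse_on \<sigma> \<delta> Z f g \<longleftrightarrow>
     (\<forall>z\<in>Z. skew_prod \<sigma> \<delta> f g z = 1 \<and> skew_prod \<sigma> \<delta> g f z = 1)"

definition skew_invertible_on :: "('a::division_ring \<Rightarrow> 'a) \<Rightarrow> ('a \<Rightarrow> 'a) \<Rightarrow> 'a set \<Rightarrow> ('a \<Rightarrow> 'a) \<Rightarrow> bool" where
  "skew_invertible_on \<sigma> \<delta> Z f \<longleftrightarrow> (\<exists>g. skew_inverse_on \<sigma> \<delta> Z f g)"

definition skew_inv :: "('a::division_ring \<Rightarrow> 'a) \<Rightarrow> ('a \<Rightarrow> 'a) \<Rightarrow> 'a set \<Rightarrow> ('a \<Rightarrow> 'a) \<Rightarrow> 'a \<Rightarrow> 'a" where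
  "skew_inv \<sigma> \<delta> Z f = (SOME g. skew_inverse_on \<sigma> \<delta> Z f g)"

text \<open>Skew rational functions P^{-1} Q in K(T;sigma,delta), represented by pairs
(P,Q) of skew polynomials with P nonzero.\<close>
definition frac_eq :: "('a::division_ring \<Rightarrow> 'a) \<Rightarrow> ('a \<Rightarrow> 'a) \<Rightarrow>
    (nat \<Rightarrow> 'a) \<times> (nat \<Rightarrow> 'a) \<Rightarrow> (nat \<Rightarrow> 'a) \<times> (nat \<Rightarrow> 'a) \<Rightarrow> bool" where
  "frac_eq \<sigma> \<delta> PQ PQ' \<longleftrightarrow>
     (\<exists>u v. is_spoly u \<and> is_spoly v \<and>
        spmul \<sigma> \<delta> u (fst PQ) = spmul \<sigma> \<delta> v (fst PQ') \<and>
        spmul \<sigma> \<delta> u (fst PQ) \<noteq> (\<lambda>_. 0) \<and>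
        spmul \<sigma> \<delta> u (snd PQ) = spmul \<sigma> \<delta> v (snd PQ'))"

definition min_rep :: "('a::division_ring \<Rightarrow> 'a) \<Rightarrow> ('a \<Rightarrow> 'a) \<Rightarrow>
    (nat \<Rightarrow> 'a) \<times> (nat \<Rightarrow> 'a) \<Rightarrow> (nat \<Rightarrow> 'a) \<times> (nat \<Rightarrow> 'a)" where
  "min_rep \<sigma> \<delta> PQ = (SOME R. is_spoly (fst R) \<and> is_spoly (snd R) \<and> spmonic (fst R) \<and>
      frac_eq \<sigma> \<delta> PQ R \<and>
      (\<forall>R'. is_spoly (fst R') \<and> is_spoly (snd R') \<and> spmonic (fst R') \<and> frac_eq \<sigma> \<delta> PQ R'
            \<longrightarrow> spdeg (fst R) \<le> spdeg (fst R')))"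

definition rf_defined_at :: "('a::division_ring \<Rightarrow> 'a) \<Rightarrow> ('a \<Rightarrow> 'a) \<Rightarrow>
    (nat \<Rightarrow> 'a) \<times> (nat \<Rightarrow> 'a) \<Rightarrow> 'a \<Rightarrow> bool" where
  "rf_defined_at \<sigma> \<delta> PQ a \<longleftrightarrow>
     skew_invertible_on \<sigma> \<delta> (sd_class \<sigma> \<delta> a) (speval \<sigma> \<delta> (fst (min_rep \<sigma> \<delta> PQ)))"

definition rf_value :: "('a::division_ring \<Rightarrow> 'a) \<Rightarrow> ('a \<Rightarrow> 'a) \<Rightarrow>
    (nat \<Rightarrow> 'a) \<times> (nat \<Rightarrow> 'a) \<Rightarrow> 'a \<Rightarrow> 'a" where
  "rf_value \<sigma> \<delta> PQ a =
     skew_prod \<sigma> \<delta>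
       (skew_inv \<sigma> \<delta> (sd_class \<sigma> \<delta> a) (speval \<sigma> \<delta> (fst (min_rep \<sigma> \<delta> PQ))))
       (speval \<sigma> \<delta> (snd (min_rep \<sigma> \<delta> PQ))) a"

end

theory Submission imports Defs begin

locale sdctx =
  fixes \<sigma> \<delta> :: "'a::division_ring \<Rightarrow> 'a"
  assumes endo: "ring_endo \<sigma>" and der: "sigma_derivation \<sigma> \<delta>"
begin

abbreviation T where "T \<equiv> spTmul \<sigma> \<delta>"

lemma s_add: "\<sigma> (x + y) = \<sigma> x + \<sigma> y" using endo by (simp add: ring_endo_def)
lemma s_mult: "\<sigma> (x * y) = \<sigma> x * \<sigma> y" using endo by (simp add: ring_endo_def)
lemma s_one: "\<sigma> 1 = 1" using endo by (simp add: ring_endo_def)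
lemma s_zero: "\<sigma> 0 = 0" using s_add[of 0 0] by simp
lemma s_minus: "\<sigma> (- x) = - \<sigma> x" using s_add[of x "-x"] s_zero by (metis minus_unique right_minus)
lemma s_diff: "\<sigma> (x - y) = \<sigma> x - \<sigma> y" using s_add[of x "-y"] s_minus by simp
lemma s_nz: "x \<noteq> 0 \<Longrightarrow> \<sigma> x \<noteq> 0"
proof
  assume "x \<noteq> 0" "\<sigma> x = 0"
  have "\<sigma> (x * inverse x) = \<sigma> x * \<sigma> (inverse x)" by (rule s_mult)
  moreover have "x * inverse x = 1" using \<open>x \<noteq> 0\<close> by simp
  ultimately show False using s_one \<open>\<sigma> x = 0\<close> by (metis mult_zero_left one_neq_zero)
qed
lemma d_add: "\<delta> (x + y) = \<delta> x + \<delta> y" using der by (simp add: sigma_derivation_def)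
lemma d_mult: "\<delta> (x * y) = \<sigma> x * \<delta> y + \<delta> x * y" using der by (simp add: sigma_derivation_def)
lemma d_zero: "\<delta> 0 = 0" using d_add[of 0 0] by simp
lemma d_minus: "\<delta> (- x) = - \<delta> x" using d_add[of x "-x"] d_zero by (metis minus_unique right_minus)
lemma d_diff: "\<delta> (x - y) = \<delta> x - \<delta> y" using d_add[of x "-y"] d_minus by simp
lemma d_one: "\<delta> 1 = 0" using d_mult[of 1 1] s_one by simp

lemma sn_nz: "x \<noteq> 0 \<Longrightarrow> (\<sigma> ^^ n) x \<noteq> 0"
  by (induction n) (auto simp: s_nz)

lemma T_add: "T (\<lambda>j. p j + q j) = (\<lambda>j. T p j + T q j)"
  by (auto simp: spTmul_def s_add d_add fun_eq_iff algebra_simps)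
lemma T_zero: "T (\<lambda>j. 0) = (\<lambda>j. 0)"
  by (auto simp: spTmul_def s_zero d_zero fun_eq_iff)
lemma T_diff: "T (\<lambda>j. p j - q j) = (\<lambda>j. T p j - T q j)"
  by (auto simp: spTmul_def s_diff d_diff fun_eq_iff algebra_simps)
lemma T_scal: "T (\<lambda>j. c * q j) = (\<lambda>j. \<sigma> c * T q j + \<delta> c * q j)"
  by (auto simp: spTmul_def s_mult d_mult fun_eq_iff algebra_simps s_zero d_zero)

lemma Tn_add: "(T ^^ n) (\<lambda>j. p j + q j) = (\<lambda>j. (T ^^ n) p j + (T ^^ n) q j)"
  by (induction n) (auto simp: T_add)
lemma Tn_zero: "(T ^^ n) (\<lambda>j. 0) = (\<lambda>j. 0)"
  by (induction n) (auto simp: T_zero)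
lemma Tn_diff: "(T ^^ n) (\<lambda>j. p j - q j) = (\<lambda>j. (T ^^ n) p j - (T ^^ n) q j)"
  by (induction n) (auto simp: T_diff)

lemma T_sum: "finite I \<Longrightarrow> T (\<lambda>j. \<Sum>i\<in>I. f i j) = (\<lambda>j. \<Sum>i\<in>I. T (f i) j)"
proof (induction I rule: finite_induct)
  case empty then show ?case by (simp add: T_zero)
next
  case (insert x F)
  then show ?case by (simp add: T_add)
qed

lemma Tn_bound:
  assumes "\<forall>j>m. q j = 0"
  shows "(\<forall>j>m+i. (T ^^ i) q j = 0) \<and> (T ^^ i) q (m+i) = (\<sigma> ^^ i) (q m)"
proof (induction i)
  case 0 then show ?case using assms by simp
next
  case (Suc i)
  define R where "R = (T ^^ i) q"
  have IH1: "\<And>j. j > m + i \<Longrightarrow> R j = 0" and IH2: "R (m+i) = (\<sigma> ^^ i) (q m)"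
    using Suc by (auto simp: R_def)
  have 1: "\<forall>j>m + Suc i. T R j = 0"
  proof (intro allI impI)
    fix j assume j: "j > m + Suc i"
    have "j - 1 > m + i" "j > m + i" using j by auto
    then have "R (j - 1) = 0" "R j = 0" using IH1 by blast+
    then show "T R j = 0" using j by (simp add: spTmul_def s_zero d_zero)
  qed
  have 2: "T R (m + Suc i) = (\<sigma> ^^ Suc i) (q m)"
    using IH1[of "m + Suc i"] IH2 by (simp add: spTmul_def d_zero)
  show ?case using 1 2 by (simp add: R_def)
qed

definition hdg :: "(nat \<Rightarrow> 'a) \<Rightarrow> nat \<Rightarrow> bool" where
  "hdg p n \<longleftrightarrow> p n \<noteq> 0 \<and> (\<forall>j>n. p j = 0)"

lemma bounded_spoly: "\<forall>i>N. p i = 0 \<Longrightarrow> is_spoly p"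
  unfolding is_spoly_def
  by (rule finite_subset[of _ "{..N}"]) (auto simp: not_le[symmetric])

lemma spoly_bounded: "is_spoly p \<Longrightarrow> \<exists>N. \<forall>i>N. p i = 0"
  unfolding is_spoly_def
  proof -
  assume "finite {i. p i \<noteq> 0}"
  then obtain N where "\<forall>i\<in>{i. p i \<noteq> 0}. i \<le> N" using finite_nat_set_iff_bounded_le by blast
  then have "\<forall>i>N. p i = 0" by (auto simp: not_le[symmetric])
  then show ?thesis by blast
qed

lemma spmul_bound:
  assumes "\<forall>i>N. p i = 0"
  shows "spmul \<sigma> \<delta> p q = (\<lambda>j. \<Sum>i\<le>N. p i * (T ^^ i) q j)"
  unfolding spmul_def
proof (rule ext, rule sum.mono_neutral_left)
  show "finite {..N}" by simp
  show "{i. p i \<noteq> 0} \<subseteq> {..N}" using assms by (auto simp: not_le[symmetric])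
qed auto

lemma hd_ex: "is_spoly p \<Longrightarrow> p \<noteq> (\<lambda>_. 0) \<Longrightarrow> hdg p (spdeg p)"
proof -
  assume a: "is_spoly p" "p \<noteq> (\<lambda>_. 0)"
  then have ne: "\<not> (\<forall>i. p i = 0)" by auto
  have f: "finite {i. p i \<noteq> 0}" using a is_spoly_def by blast
  have ne2: "{i. p i \<noteq> 0} \<noteq> {}" using ne by auto
  have "spdeg p = Max {i. p i \<noteq> 0}" unfolding spdeg_def by (rule if_not_P[OF ne])
  moreover have "p (Max {i. p i \<noteq> 0}) \<noteq> 0" using Max_in[OF f ne2] by blast
  moreover have "\<forall>j > Max {i. p i \<noteq> 0}. p j = 0"
  proof (intro allI impI, rule ccontr)
    fix j assume "j > Max {i. p i \<noteq> 0}" "p j \<noteq> 0"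
    then have "j \<in> {i. p i \<noteq> 0}" by simp
    then have "j \<le> Max {i. p i \<noteq> 0}" by (rule Max_ge[OF f])
    then show False using \<open>j > Max {i. p i \<noteq> 0}\<close> by linarith
  qed
  ultimately show ?thesis unfolding hdg_def by metis
qed

lemma hd_deg: "hdg p n \<Longrightarrow> spdeg p = n"
proof -
  assume h: "hdg p n"
  then have ne: "\<not> (\<forall>i. p i = 0)" by (auto simp: hdg_def)
  have f: "finite {i. p i \<noteq> 0}" using h bounded_spoly[of n p] unfolding is_spoly_def hdg_def by blast
  have "Max {i. p i \<noteq> 0} = n"
    using h by (intro Max_eqI[OF f]) (auto simp: hdg_def not_le[symmetric])
  then show ?thesis unfolding spdeg_def by (subst if_not_P[OF ne])
qed

lemma hd_unique: "hdg p n \<Longrightarrow> hdg p m \<Longrightarrow> n = m"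
  using hd_deg by blast

lemma hd_spoly: "hdg p n \<Longrightarrow> is_spoly p"
  using bounded_spoly hdg_def by blast

abbreviation M where "M \<equiv> spmul \<sigma> \<delta>"

lemma spmul_zero_left: "M (\<lambda>_. 0) q = (\<lambda>_. 0)"
  by (simp add: spmul_def)

lemma spmul_zero_right: "is_spoly p \<Longrightarrow> M p (\<lambda>_. 0) = (\<lambda>_. 0)"
proof -
  assume "is_spoly p"
  then obtain N where N: "\<forall>i>N. p i = 0" using spoly_bounded by blast
  show ?thesis unfolding spmul_bound[OF N] by (simp add: Tn_zero)
qed

lemma spmul_const_left: "M (spconst c) q = (\<lambda>j. c * q j)"
proof -
  have N: "\<forall>i>0. spconst c i = 0" by (simp add: spconst_def)
  show ?thesis unfolding spmul_bound[OF N] by (simp add: spconst_def)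
qed

lemma spmul_one_left: "M (spconst 1) q = q"
  by (simp add: spmul_const_left)

lemma Tn_e: "(T ^^ i) (spconst 1) = (\<lambda>j. if j = i then 1 else 0)"
proof (induction i)
  case 0 then show ?case by (simp add: spconst_def fun_eq_iff)
next
  case (Suc i)
  show ?case using Suc
    by (auto simp: fun_eq_iff spTmul_def s_one s_zero d_one d_zero)
qed

lemma spmul_one_right: "is_spoly p \<Longrightarrow> M p (spconst 1) = p"
proof -
  assume "is_spoly p"
  then obtain N where N: "\<forall>i>N. p i = 0" using spoly_bounded by blast
  show ?thesis unfolding spmul_bound[OF N] Tn_e
  proof (rule ext)
    fix j
    show "(\<Sum>i\<le>N. p i * (if j = i then 1 else 0)) = p j"
      using N by (cases "j \<le> N") (auto simp: if_distrib cong: if_cong)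
  qed
qed

lemma spmul_add_right: "is_spoly p \<Longrightarrow> M p (\<lambda>j. q j + r j) = (\<lambda>j. M p q j + M p r j)"
proof -
  assume "is_spoly p"
  then obtain N where N: "\<forall>i>N. p i = 0" using spoly_bounded by blast
  show ?thesis unfolding spmul_bound[OF N] Tn_add by (simp add: sum.distrib distrib_left)
qed

lemma spmul_diff_right: "is_spoly p \<Longrightarrow> M p (\<lambda>j. q j - r j) = (\<lambda>j. M p q j - M p r j)"
proof -
  assume "is_spoly p"
  then obtain N where N: "\<forall>i>N. p i = 0" using spoly_bounded by blast
  show ?thesis unfolding spmul_bound[OF N] Tn_diff by (simp add: sum_subtractf right_diff_distrib)
qed

lemma spmul_diff_left:
  assumes "is_spoly p" "is_spoly q"
  shows "M (\<lambda>i. p i - q i) r = (\<lambda>j. M p r j - M q r j)"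
proof -
  obtain N1 where N1: "\<forall>i>N1. p i = 0" using spoly_bounded assms by blast
  obtain N2 where N2: "\<forall>i>N2. q i = 0" using spoly_bounded assms by blast
  have a: "\<forall>i>max N1 N2. p i = 0" "\<forall>i>max N1 N2. q i = 0" "\<forall>i>max N1 N2. p i - q i = 0"
    using N1 N2 by auto
  show ?thesis unfolding spmul_bound[OF a(1)] spmul_bound[OF a(2)] spmul_bound[OF a(3)]
    by (simp add: sum_subtractf left_diff_distrib)
qed

lemma spmul_scal_left:
  assumes "is_spoly p"
  shows "M (\<lambda>i. c * p i) r = (\<lambda>j. c * M p r j)"
proof -
  obtain N where N: "\<forall>i>N. p i = 0" using spoly_bounded assms by blast
  have a: "\<forall>i>N. c * p i = 0" using N by auto
  show ?thesis unfolding spmul_bound[OF N] spmul_bound[OF a]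
    by (simp add: sum_distrib_left mult.assoc)
qed

lemma spmul_prod_bound:
  assumes p: "\<forall>i>n. p i = 0" and q: "\<forall>j>m. q j = 0"
  shows "(\<forall>j>n+m. M p q j = 0) \<and> M p q (n+m) = p n * (\<sigma> ^^ n) (q m)"
proof -
  have tb: "\<And>i j. j > m + i \<Longrightarrow> (T ^^ i) q j = 0" using Tn_bound[OF q] by blast
  have tt: "\<And>i. (T ^^ i) q (m + i) = (\<sigma> ^^ i) (q m)" using Tn_bound[OF q] by blast
  have 1: "\<forall>j>n+m. M p q j = 0"
  proof (intro allI impI)
    fix j assume j: "j > n + m"
    have z: "\<And>i. i \<in> {..n} \<Longrightarrow> p i * (T ^^ i) q j = 0"
      using tb j by (simp add: add.commute less_le_trans)
    show "M p q j = 0" unfolding spmul_bound[OF p] using z by (intro sum.neutral) blast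
  qed
  have "M p q (n+m) = (\<Sum>i<Suc n. p i * (T ^^ i) q (n+m))"
    unfolding spmul_bound[OF p] lessThan_Suc_atMost by simp
  also have "\<dots> = (\<Sum>i<n. p i * (T ^^ i) q (n+m)) + p n * (T ^^ n) q (n+m)"
    by (rule sum.lessThan_Suc)
  also have "(\<Sum>i<n. p i * (T ^^ i) q (n+m)) = 0"
    by (rule sum.neutral) (auto simp: tb)
  also have "(T ^^ n) q (n+m) = (\<sigma> ^^ n) (q m)" using tt[of n] by (simp add: add.commute)
  finally show ?thesis using 1 by simp
qed

lemma hdg_mul: "hdg p n \<Longrightarrow> hdg q m \<Longrightarrow> hdg (M p q) (n+m)"
  using spmul_prod_bound[of n p m q] sn_nz unfolding hdg_def by auto

lemma spoly_mul: "is_spoly p \<Longrightarrow> is_spoly q \<Longrightarrow> is_spoly (M p q)"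
proof -
  assume "is_spoly p" "is_spoly q"
  then obtain n m where "\<forall>i>n. p i = 0" "\<forall>j>m. q j = 0" using spoly_bounded by meson
  then have "\<forall>j>n+m. M p q j = 0" using spmul_prod_bound[of n p m q] by blast
  then show ?thesis by (rule bounded_spoly)
qed

lemma spoly_Tn: "is_spoly q \<Longrightarrow> is_spoly ((T ^^ i) q)"
proof -
  assume "is_spoly q"
  then obtain m where "\<forall>j>m. q j = 0" using spoly_bounded by blast
  then have "\<forall>j>m+i. (T ^^ i) q j = 0" using Tn_bound by blast
  then show ?thesis by (rule bounded_spoly)
qed

lemma spmul_domain:
  assumes "is_spoly v" "v \<noteq> (\<lambda>_. 0)" "is_spoly X" "M v X = (\<lambda>_. 0)"
  shows "X = (\<lambda>_. 0)"
proof (rule ccontr)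
  assume "X \<noteq> (\<lambda>_. 0)"
  then have "hdg (M v X) (spdeg v + spdeg X)" using hd_ex assms hdg_mul by blast
  then show False using assms(4) by (simp add: hdg_def)
qed

lemma spmul_T:
  assumes N: "\<forall>i>N. s i = 0"
  shows "M (T s) r = T (M s r)"
proof (rule ext)
  fix k
  have bTs: "\<forall>i>Suc N. T s i = 0" using N by (auto simp: spTmul_def d_zero s_zero)
  define A where "A j = (if j = 0 then 0 else \<sigma> (s (j - 1)))" for j
  define B where "B j = \<delta> (s j)" for j
  define X where "X j = (T ^^ j) r k" for j
  have TsAB: "T s j = A j + B j" for j by (simp add: spTmul_def A_def B_def)
  have "M (T s) r k = (\<Sum>j\<le>Suc N. (A j + B j) * X j)"
    unfolding spmul_bound[OF bTs] TsAB X_def by simp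
  also have "\<dots> = (\<Sum>j\<le>Suc N. A j * X j) + (\<Sum>j\<le>Suc N. B j * X j)"
    by (simp add: distrib_right sum.distrib)
  also have "(\<Sum>j\<le>Suc N. A j * X j) = (\<Sum>i\<le>N. \<sigma> (s i) * X (Suc i))"
    unfolding sum.atMost_Suc_shift by (simp add: A_def)
  also have "(\<Sum>j\<le>Suc N. B j * X j) = (\<Sum>i\<le>N. \<delta> (s i) * X i)"
    unfolding sum.atMost_Suc using N by (simp add: B_def d_zero)
  finally have L: "M (T s) r k = (\<Sum>i\<le>N. \<sigma> (s i) * X (Suc i)) + (\<Sum>i\<le>N. \<delta> (s i) * X i)" .
  have "T (M s r) k = T (\<lambda>k. \<Sum>i\<le>N. s i * (T ^^ i) r k) k"
    unfolding spmul_bound[OF N] by simp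
  also have "\<dots> = (\<Sum>i\<le>N. T (\<lambda>k. s i * (T ^^ i) r k) k)"
    using T_sum[of "{..N}" "\<lambda>i k. s i * (T ^^ i) r k"] by simp
  also have "\<dots> = (\<Sum>i\<le>N. \<sigma> (s i) * X (Suc i) + \<delta> (s i) * X i)"
    unfolding T_scal X_def by simp
  finally show "M (T s) r k = T (M s r) k" using L by (simp add: sum.distrib)
qed

lemma spmul_Tn:
  assumes "is_spoly s"
  shows "M ((T ^^ i) s) r = (T ^^ i) (M s r)"
proof (induction i)
  case 0 then show ?case by simp
next
  case (Suc i)
  obtain N where N: "\<forall>j>N. (T ^^ i) s j = 0" using spoly_bounded spoly_Tn assms by blast
  show ?case using spmul_T[OF N, of r] Suc by simp
qed

lemma spmul_sum_left:
  assumes "finite I" "\<forall>i\<in>I. \<forall>l>K. f i l = 0"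
  shows "M (\<lambda>l. \<Sum>i\<in>I. f i l) r = (\<lambda>k. \<Sum>i\<in>I. M (f i) r k)"
proof (rule ext)
  fix k
  have b: "\<forall>l>K. (\<Sum>i\<in>I. f i l) = 0" using assms(2) by simp
  have "M (\<lambda>l. \<Sum>i\<in>I. f i l) r k = (\<Sum>l\<le>K. (\<Sum>i\<in>I. f i l) * (T ^^ l) r k)"
    unfolding spmul_bound[OF b] by simp
  also have "\<dots> = (\<Sum>l\<le>K. \<Sum>i\<in>I. f i l * (T ^^ l) r k)"
    by (simp add: sum_distrib_right)
  also have "\<dots> = (\<Sum>i\<in>I. \<Sum>l\<le>K. f i l * (T ^^ l) r k)"
    by (rule sum.swap)
  also have "\<dots> = (\<Sum>i\<in>I. M (f i) r k)"
  proof (rule sum.cong)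
    fix i assume "i \<in> I"
    then have bi: "\<forall>l>K. f i l = 0" using assms(2) by blast
    show "(\<Sum>l\<le>K. f i l * (T ^^ l) r k) = M (f i) r k"
      unfolding spmul_bound[OF bi] by simp
  qed simp
  finally show "M (\<lambda>l. \<Sum>i\<in>I. f i l) r k = (\<Sum>i\<in>I. M (f i) r k)" .
qed

lemma spmul_assoc:
  assumes v: "is_spoly v" and q: "is_spoly q"
  shows "M (M v q) r = M v (M q r)"
proof -
  obtain N where N: "\<forall>i>N. v i = 0" using spoly_bounded v by blast
  obtain m where m: "\<forall>j>m. q j = 0" using spoly_bounded q by blast
  have unif: "\<forall>i\<in>{..N}. \<forall>l>m+N. v i * (T ^^ i) q l = 0"
  proof (intro ballI allI impI)
    fix i l assume "i \<in> {..N}" "l > m + N"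
    then have "l > m + i" by auto
    then show "v i * (T ^^ i) q l = 0" using Tn_bound[OF m, of i] by simp
  qed
  have "M (M v q) r = M (\<lambda>l. \<Sum>i\<in>{..N}. v i * (T ^^ i) q l) r"
    unfolding spmul_bound[OF N] by simp
  also have "\<dots> = (\<lambda>k. \<Sum>i\<in>{..N}. M (\<lambda>l. v i * (T ^^ i) q l) r k)"
    by (rule spmul_sum_left[OF _ unif]) simp
  also have "\<dots> = (\<lambda>k. \<Sum>i\<in>{..N}. v i * (T ^^ i) (M q r) k)"
    unfolding spmul_scal_left[OF spoly_Tn[OF q]] spmul_Tn[OF q] by simp
  also have "\<dots> = M v (M q r)"
    unfolding spmul_bound[OF N] by simp
  finally show ?thesis .
qed

lemma spoly_Tm: "is_spoly (spTminus b)"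
  by (rule bounded_spoly[of 1]) (simp add: spTminus_def)

lemma hdg_Tm: "hdg (spTminus b) 1"
  by (simp add: hdg_def spTminus_def)

lemma spoly_const: "is_spoly (spconst c)"
  by (rule bounded_spoly[of 0]) (simp add: spconst_def)

definition cand where
  "cand b R \<longleftrightarrow> is_spoly (fst R) \<and> is_spoly (snd R) \<and> spmonic (fst R) \<and>
      frac_eq \<sigma> \<delta> (spTminus b, spconst 1) R"

lemma nz_hdg: "is_spoly p \<Longrightarrow> p \<noteq> (\<lambda>_. 0) \<Longrightarrow> \<exists>n. hdg p n"
  using hd_ex by blast

lemma cand_deg_pos:
  assumes c: "cand b (P, Q)"
  shows "spdeg P \<noteq> 0"
proof
  assume d0: "spdeg P = 0"
  have sP: "is_spoly P" and sQ: "is_spoly Q" and mon: "P (spdeg P) = 1"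
    using c by (auto simp: cand_def spmonic_def)
  have P0: "P 0 = 1" using mon d0 by simp
  have "P \<noteq> (\<lambda>_. 0)"
  proof
    assume "P = (\<lambda>_. 0)" then have "P 0 = 0" by simp
    with P0 show False by simp
  qed
  then have "hdg P 0" using hd_ex[OF sP] d0 by metis
  then have Pe: "P = spconst 1" using P0 by (auto simp: hdg_def spconst_def fun_eq_iff)
  obtain u v where su: "is_spoly u" and sv: "is_spoly v" and e1: "M u (spTminus b) = M v P"
    and ne: "M u (spTminus b) \<noteq> (\<lambda>_. 0)" and e2: "M u (spconst 1) = M v Q"
    using c by (auto simp: cand_def frac_eq_def)
  have ev: "v = M u (spTminus b)" using e1 Pe spmul_one_right[OF sv] by simp
  have eu: "u = M v Q" using e2 spmul_one_right[OF su] by simp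
  have unz: "u \<noteq> (\<lambda>_. 0)" using ne spmul_zero_left by metis
  have Qnz: "Q \<noteq> (\<lambda>_. 0)" using unz eu spmul_zero_right[OF sv] by metis
  obtain du where hu: "hdg u du" using nz_hdg[OF su unz] by blast
  obtain dq where hq: "hdg Q dq" using nz_hdg[OF sQ Qnz] by blast
  have hv: "hdg v (du + 1)" using hdg_mul[OF hu hdg_Tm] ev by simp
  have "hdg u (du + 1 + dq)" using hdg_mul[OF hv hq] eu by simp
  from hd_unique[OF hu this] show False by simp
qed

lemma cand_W: "cand b (spTminus b, spconst 1)"
proof -
  have "spdeg (spTminus b) = 1" using hd_deg[OF hdg_Tm] .
  then have m: "spmonic (spTminus b)" by (simp add: spmonic_def spTminus_def)
  have nz: "M (spconst 1) (spTminus b) \<noteq> (\<lambda>_. 0)"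
  proof
    assume "M (spconst 1) (spTminus b) = (\<lambda>_. 0)"
    then have "spTminus b 1 = 0" using spmul_one_left by metis
    then show False by (simp add: spTminus_def)
  qed
  have f: "frac_eq \<sigma> \<delta> (spTminus b, spconst 1) (spTminus b, spconst 1)"
    unfolding frac_eq_def using spoly_const nz by auto
  show ?thesis unfolding cand_def fst_conv snd_conv using m f spoly_Tm[of b] spoly_const[of 1] by blast
qed

lemma min_rep_eq: "min_rep \<sigma> \<delta> (spTminus b, spconst 1) = (spTminus b, spconst 1)"
proof -
  define R where "R = min_rep \<sigma> \<delta> (spTminus b, spconst 1)"
  have ex: "\<exists>R. cand b R \<and> (\<forall>R'. cand b R' \<longrightarrow> spdeg (fst R) \<le> spdeg (fst R'))"
  proof (intro exI conjI allI impI)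
    show "cand b (spTminus b, spconst 1)" by (rule cand_W)
    fix R' assume "cand b R'"
    then have "spdeg (fst R') \<noteq> 0" using cand_deg_pos[of b "fst R'" "snd R'"] by simp
    then show "spdeg (fst (spTminus b, spconst (1::'a))) \<le> spdeg (fst R')"
      using hd_deg[OF hdg_Tm] by simp
  qed
  have "cand b R \<and> (\<forall>R'. cand b R' \<longrightarrow> spdeg (fst R) \<le> spdeg (fst R'))"
  proof -
    have "R = (SOME R. cand b R \<and> (\<forall>R'. cand b R' \<longrightarrow> spdeg (fst R) \<le> spdeg (fst R')))"
      unfolding R_def min_rep_def cand_def by (simp only: conj_assoc)
    then show ?thesis using someI_ex[OF ex] by simp
  qed
  then have cR: "cand b R" and minR: "spdeg (fst R) \<le> spdeg (fst (spTminus b, spconst (1::'a)))"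
    using cand_W by blast+
  obtain P Q where RPQ: "R = (P, Q)" by (cases R)
  have cPQ: "cand b (P, Q)" using cR RPQ by simp
  have sP: "is_spoly P" and sQ: "is_spoly Q" and mon: "P (spdeg P) = 1"
    using cPQ by (auto simp: cand_def spmonic_def)
  have d1: "spdeg P = 1" using minR cand_deg_pos[OF cPQ] hd_deg[OF hdg_Tm] RPQ by simp
  have "P \<noteq> (\<lambda>_. 0)"
  proof
    assume "P = (\<lambda>_. 0)" then have "P (spdeg P) = 0" by simp
    with mon show False by simp
  qed
  then have hP: "hdg P 1" using hd_ex[OF sP] d1 by metis
  have P1: "P 1 = 1" using mon d1 by simp
  obtain u v where su: "is_spoly u" and sv: "is_spoly v" and e1: "M u (spTminus b) = M v P"
    and ne: "M u (spTminus b) \<noteq> (\<lambda>_. 0)" and e2: "M u (spconst 1) = M v Q"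
    using cPQ by (auto simp: cand_def frac_eq_def)
  have eu: "u = M v Q" using e2 spmul_one_right[OF su] by simp
  have unz: "u \<noteq> (\<lambda>_. 0)" using ne spmul_zero_left by metis
  have vnz: "v \<noteq> (\<lambda>_. 0)" using ne e1 spmul_zero_left by metis
  have Qnz: "Q \<noteq> (\<lambda>_. 0)" using unz eu spmul_zero_right[OF sv] by metis
  obtain du where hu: "hdg u du" using nz_hdg[OF su unz] by blast
  obtain dv where hv: "hdg v dv" using nz_hdg[OF sv vnz] by blast
  obtain dq where hq: "hdg Q dq" using nz_hdg[OF sQ Qnz] by blast
  have "du = dv + dq" using hdg_mul[OF hv hq] eu hd_unique[OF hu] by simp
  moreover have "du + 1 = dv + 1" using hdg_mul[OF hu hdg_Tm] hdg_mul[OF hv hP] e1 hd_unique by metis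
  ultimately have dq0: "dq = 0" by simp
  define c where "c = Q 0"
  have Qc: "Q = spconst c" using hq dq0 by (auto simp: hdg_def spconst_def c_def fun_eq_iff)
  have "M v P = M (M v Q) (spTminus b)" using e1 eu by simp
  also have "\<dots> = M v (M Q (spTminus b))" by (rule spmul_assoc[OF sv sQ])
  also have "M Q (spTminus b) = (\<lambda>j. c * spTminus b j)" unfolding Qc spmul_const_left ..
  finally have eq: "M v P = M v (\<lambda>j. c * spTminus b j)" .
  have sD: "is_spoly (\<lambda>j. P j - c * spTminus b j)"
    using hP by (intro bounded_spoly[of 1]) (auto simp: hdg_def spTminus_def)
  have "M v (\<lambda>j. P j - c * spTminus b j) = (\<lambda>_. 0)"
    unfolding spmul_diff_right[OF sv] eq by simp
  then have D0: "(\<lambda>j. P j - c * spTminus b j) = (\<lambda>_. 0)"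
    using spmul_domain[OF sv vnz sD] by blast
  have "P 1 - c * spTminus b 1 = 0" using fun_cong[OF D0, of 1] by simp
  then have c1: "c = 1" using P1 by (simp add: spTminus_def)
  have "\<And>j. P j = spTminus b j"
  proof -
    fix j
    have "P j - c * spTminus b j = 0" using fun_cong[OF D0, of j] by simp
    then show "P j = spTminus b j" using c1 by simp
  qed
  then have "P = spTminus b" by (simp add: fun_eq_iff)
  then have "R = (spTminus b, spconst 1)" using RPQ Qc c1 by simp
  then show ?thesis by (simp add: R_def)
qed

lemma speval_unique:
  assumes e1: "(\<lambda>j. P j - spconst r1 j) = M Q1 (spTminus c)"
    and e2: "(\<lambda>j. P j - spconst r2 j) = M Q2 (spTminus c)"
    and s1: "is_spoly Q1" and s2: "is_spoly Q2"
  shows "r1 = r2"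
proof -
  define D where "D = (\<lambda>i. Q1 i - Q2 i)"
  have MD: "M D (spTminus c) = (\<lambda>j. spconst r2 j - spconst r1 j)"
    unfolding D_def spmul_diff_left[OF s1 s2] e1[symmetric] e2[symmetric] by simp
  show ?thesis
  proof (cases "D = (\<lambda>_. 0)")
    case True
    then have "M D (spTminus c) = (\<lambda>_. 0)" using spmul_zero_left by simp
    then show ?thesis using fun_cong[OF MD, of 0] by (simp add: spconst_def)
  next
    case False
    have sD: "is_spoly D"
    proof -
      obtain N1 where "\<forall>i>N1. Q1 i = 0" using spoly_bounded s1 by blast
      moreover obtain N2 where "\<forall>i>N2. Q2 i = 0" using spoly_bounded s2 by blast
      ultimately have "\<forall>i>max N1 N2. D i = 0" by (simp add: D_def)
      then show ?thesis by (rule bounded_spoly)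
    qed
    obtain d where "hdg D d" using nz_hdg[OF sD False] by blast
    then have "hdg (M D (spTminus c)) (d + 1)" using hdg_mul hdg_Tm by blast
    then have "M D (spTminus c) (d+1) \<noteq> 0" by (simp add: hdg_def)
    then show ?thesis using MD by (simp add: spconst_def)
  qed
qed

lemma speval_Tm: "speval \<sigma> \<delta> (spTminus b) c = c - b"
  unfolding speval_def
proof (rule the_equality)
  show "\<exists>Q. is_spoly Q \<and> (\<lambda>j. spTminus b j - spconst (c - b) j) = M Q (spTminus c)"
  proof (intro exI conjI)
    show "is_spoly (spconst (1::'a))" by (rule spoly_const)
    show "(\<lambda>j. spTminus b j - spconst (c - b) j) = M (spconst 1) (spTminus c)"
      unfolding spmul_one_left by (auto simp: spTminus_def spconst_def fun_eq_iff)
  qed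
  fix r assume "\<exists>Q. is_spoly Q \<and> (\<lambda>j. spTminus b j - spconst r j) = M Q (spTminus c)"
  then obtain Q where "is_spoly Q" "(\<lambda>j. spTminus b j - spconst r j) = M Q (spTminus c)" by blast
  moreover have "(\<lambda>j. spTminus b j - spconst (c - b) j) = M (spconst 1) (spTminus c)"
    unfolding spmul_one_left by (auto simp: spTminus_def spconst_def fun_eq_iff)
  ultimately show "r = c - b" using speval_unique spoly_const by blast
qed

lemma speval_one: "speval \<sigma> \<delta> (spconst 1) c = 1"
  unfolding speval_def
proof (rule the_equality)
  have z: "is_spoly (\<lambda>_::nat. 0::'a)" by (rule bounded_spoly[of 0]) simp
  show "\<exists>Q. is_spoly Q \<and> (\<lambda>j. spconst 1 j - spconst 1 j) = M Q (spTminus c)"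
    by (rule exI[of _ "\<lambda>_. 0"]) (simp add: z spmul_zero_left)
  fix r assume "\<exists>Q. is_spoly Q \<and> (\<lambda>j. spconst 1 j - spconst r j) = M Q (spTminus c)"
  then obtain Q where "is_spoly Q" "(\<lambda>j. spconst 1 j - spconst r j) = M Q (spTminus c)" by blast
  moreover have "(\<lambda>j. spconst 1 j - spconst 1 j) = M (\<lambda>_. 0) (spTminus c)"
    by (simp add: spmul_zero_left)
  ultimately show "r = 1" using speval_unique z by blast
qed

abbreviation act where "act \<equiv> sd_act \<sigma> \<delta>"
abbreviation cls where "cls \<equiv> sd_class \<sigma> \<delta>"

lemma act_mult: "x \<noteq> 0 \<Longrightarrow> act x z * x = \<sigma> x * z + \<delta> x"
  by (simp add: sd_act_def distrib_right mult.assoc)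

lemma act_one: "act 1 z = z"
  by (simp add: sd_act_def s_one d_one)

lemma act_comp:
  assumes x: "x \<noteq> 0" and y: "y \<noteq> 0"
  shows "act y (act x z) = act (y * x) z"
proof -
  have yx: "y * x \<noteq> 0" using x y by simp
  have "act y (act x z) * (y * x) = (act y (act x z) * y) * x" by (simp add: mult.assoc)
  also have "\<dots> = (\<sigma> y * act x z + \<delta> y) * x" using act_mult[OF y] by simp
  also have "\<dots> = \<sigma> y * (act x z * x) + \<delta> y * x" by (simp add: distrib_right mult.assoc)
  also have "\<dots> = \<sigma> y * (\<sigma> x * z + \<delta> x) + \<delta> y * x" using act_mult[OF x] by simp
  also have "\<dots> = \<sigma> (y * x) * z + \<delta> (y * x)" by (simp add: s_mult d_mult distrib_left mult.assoc add.assoc)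
  also have "\<dots> = act (y * x) z * (y * x)" using act_mult[OF yx] by simp
  finally show ?thesis using mult_right_cancel[OF yx] by blast
qed

lemma in_cls_self: "a \<in> cls a"
proof -
  show ?thesis unfolding sd_class_def mem_Collect_eq
    by (intro exI[of _ 1] conjI) (simp_all add: act_one)
qed

lemma cls_trans: "w \<in> cls a \<Longrightarrow> y \<noteq> 0 \<Longrightarrow> act y w \<in> cls a"
proof -
  assume "w \<in> cls a" "y \<noteq> 0"
  then obtain x where x: "x \<noteq> 0" "w = act x a" by (auto simp: sd_class_def)
  then have "act y w = act (y * x) a" using act_comp \<open>y \<noteq> 0\<close> by simp
  moreover have "y * x \<noteq> 0" using x \<open>y \<noteq> 0\<close> by simp
  ultimately show ?thesis by (auto simp: sd_class_def)
qed

lemma eq_nz: "\<sigma> x * z + \<delta> x - b * x = 1 \<Longrightarrow> x \<noteq> 0"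
  by (auto simp: s_zero d_zero)

lemma eq_act: "x \<noteq> 0 \<Longrightarrow> (\<sigma> x * z + \<delta> x - b * x = 1) \<longleftrightarrow> (act x z - b) * x = 1"
  by (simp add: act_mult left_diff_distrib)

lemma eq_unique:
  assumes b: "b \<notin> cls a" and w: "w \<in> cls a"
    and e1: "\<sigma> x1 * w + \<delta> x1 - b * x1 = 1" and e2: "\<sigma> x2 * w + \<delta> x2 - b * x2 = 1"
  shows "x1 = x2"
proof (rule ccontr)
  assume ne: "x1 \<noteq> x2"
  define x where "x = x1 - x2"
  have xnz: "x \<noteq> 0" using ne by (simp add: x_def)
  have "\<sigma> x * w + \<delta> x - b * x = (\<sigma> x1 * w + \<delta> x1 - b * x1) - (\<sigma> x2 * w + \<delta> x2 - b * x2)"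
    by (simp add: x_def s_diff d_diff algebra_simps)
  then have "\<sigma> x * w + \<delta> x = b * x" using e1 e2 by simp
  then have "act x w * x = b * x" using act_mult[OF xnz] by simp
  then have "act x w = b" using mult_right_cancel[OF xnz] by blast
  then show False using cls_trans[OF w xnz] b by simp
qed

lemma inv_dir1:
  assumes inv: "skew_invertible_on \<sigma> \<delta> (cls a) (\<lambda>c. c - b)"
  shows "b \<notin> cls a \<and> (\<forall>c\<in>cls a. \<exists>x. \<sigma> x * c + \<delta> x - b * x = 1)"
proof -
  obtain g where g0: "skew_inverse_on \<sigma> \<delta> (cls a) (\<lambda>c. c - b) g"
    using inv unfolding skew_invertible_on_def by blast
  have g: "\<And>z. z \<in> cls a \<Longrightarrow> skew_prod \<sigma> \<delta> (\<lambda>c. c - b) g z = 1 \<and> skew_prod \<sigma> \<delta> g (\<lambda>c. c - b) z = 1"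
    using g0 unfolding skew_inverse_on_def by blast
  have 1: "b \<notin> cls a"
  proof
    assume "b \<in> cls a"
    then have "skew_prod \<sigma> \<delta> g (\<lambda>c. c - b) b = 1" using g by blast
    moreover have "skew_prod \<sigma> \<delta> g (\<lambda>c. c - b) b = 0" unfolding skew_prod_def by simp
    ultimately show False by simp
  qed
  have 2: "\<exists>x. \<sigma> x * c + \<delta> x - b * x = 1" if c: "c \<in> cls a" for c
  proof -
    have h: "skew_prod \<sigma> \<delta> (\<lambda>c. c - b) g c = 1" using g[OF c] by blast
    have nz: "g c \<noteq> 0"
    proof
      assume "g c = 0"
      then have "skew_prod \<sigma> \<delta> (\<lambda>c. c - b) g c = 0" unfolding skew_prod_def by simp
      with h show False by simp
    qed
    have "(act (g c) c - b) * g c = 1" using h nz unfolding skew_prod_def by simp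
    then have "\<sigma> (g c) * c + \<delta> (g c) - b * g c = 1" using eq_act[OF nz] by blast
    then show ?thesis by blast
  qed
  show ?thesis using 1 2 by blast
qed

lemma inv_dir2:
  assumes a: "b \<notin> cls a" and a2: "\<forall>c\<in>cls a. \<exists>x. \<sigma> x * c + \<delta> x - b * x = 1"
  shows "skew_invertible_on \<sigma> \<delta> (cls a) (\<lambda>c. c - b)"
proof -
  define g where "g c = (SOME x. \<sigma> x * c + \<delta> x - b * x = 1)" for c
  have gE: "\<sigma> (g c) * c + \<delta> (g c) - b * g c = 1" if c: "c \<in> cls a" for c
  proof -
    have "\<exists>x. \<sigma> x * c + \<delta> x - b * x = 1" using a2 c by blast
    then show ?thesis unfolding g_def by (rule someI_ex)
  qed
  have p1: "skew_prod \<sigma> \<delta> (\<lambda>c. c - b) g z = 1" if z: "z \<in> cls a" for z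
  proof -
    have e: "\<sigma> (g z) * z + \<delta> (g z) - b * g z = 1" using gE[OF z] .
    have nz: "g z \<noteq> 0" using eq_nz[OF e] .
    have "(act (g z) z - b) * g z = 1" using e eq_act[OF nz] by blast
    then show ?thesis using nz unfolding skew_prod_def by simp
  qed
  have p2: "skew_prod \<sigma> \<delta> g (\<lambda>c. c - b) z = 1" if z: "z \<in> cls a" for z
  proof -
    have zb: "z - b \<noteq> 0"
    proof
      assume "z - b = 0" then have "z = b" by simp
      with z a show False by simp
    qed
    define w where "w = act (z - b) z"
    have w: "w \<in> cls a" unfolding w_def using cls_trans[OF z zb] .
    define y where "y = inverse (z - b)"
    have ynz: "y \<noteq> 0" using zb by (simp add: y_def)
    have "act y w = act (y * (z - b)) z" unfolding w_def using act_comp[OF zb ynz] .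
    also have "y * (z - b) = 1" using zb by (simp add: y_def)
    finally have ayw: "act y w = z" by (simp add: act_one)
    have "(act y w - b) * y = (z - b) * y" using ayw by simp
    also have "\<dots> = 1" using zb by (simp add: y_def)
    finally have "(act y w - b) * y = 1" .
    then have ey: "\<sigma> y * w + \<delta> y - b * y = 1" using eq_act[OF ynz] by blast
    have gw: "g w = y" by (rule eq_unique[OF a w gE[OF w] ey])
    have "skew_prod \<sigma> \<delta> g (\<lambda>c. c - b) z = g w * (z - b)"
      unfolding skew_prod_def w_def using zb by simp
    also have "\<dots> = 1" unfolding gw y_def using zb by simp
    finally show ?thesis .
  qed
  have "skew_inverse_on \<sigma> \<delta> (cls a) (\<lambda>c. c - b) g"
    unfolding skew_inverse_on_def using p1 p2 by blast
  then show ?thesis unfolding skew_invertible_on_def by blast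
qed

lemma inv_iff:
  "skew_invertible_on \<sigma> \<delta> (cls a) (\<lambda>c. c - b) \<longleftrightarrow>
     b \<notin> cls a \<and> (\<forall>c\<in>cls a. \<exists>x. \<sigma> x * c + \<delta> x - b * x = 1)"
  using inv_dir1 inv_dir2 by blast

lemma inv_value:
  assumes "skew_invertible_on \<sigma> \<delta> (cls a) (\<lambda>c. c - b)"
  shows "\<sigma> (skew_inv \<sigma> \<delta> (cls a) (\<lambda>c. c - b) a) * a + \<delta> (skew_inv \<sigma> \<delta> (cls a) (\<lambda>c. c - b) a)
          - b * skew_inv \<sigma> \<delta> (cls a) (\<lambda>c. c - b) a = 1"
proof -
  define g where "g = skew_inv \<sigma> \<delta> (cls a) (\<lambda>c. c - b)"
  have ex: "\<exists>g. skew_inverse_on \<sigma> \<delta> (cls a) (\<lambda>c. c - b) g"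
    using assms unfolding skew_invertible_on_def .
  have "skew_inverse_on \<sigma> \<delta> (cls a) (\<lambda>c. c - b) g"
    unfolding g_def skew_inv_def by (rule someI_ex[OF ex])
  then have h: "skew_prod \<sigma> \<delta> (\<lambda>c. c - b) g a = 1"
    using in_cls_self unfolding skew_inverse_on_def by blast
  have nz: "g a \<noteq> 0"
  proof
    assume "g a = 0"
    then have "skew_prod \<sigma> \<delta> (\<lambda>c. c - b) g a = 0" unfolding skew_prod_def by simp
    with h show False by simp
  qed
  have "(act (g a) a - b) * g a = 1" using h nz unfolding skew_prod_def by simp
  then show ?thesis using eq_act[OF nz] unfolding g_def[symmetric] by blast
qed

end

theorem proposition3p2:
  fixes \<sigma> \<delta> :: "'a::division_ring \<Rightarrow> 'a" and a b :: 'a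
  assumes "ring_endo \<sigma>" and "sigma_derivation \<sigma> \<delta>"
  shows "(rf_defined_at \<sigma> \<delta> (spTminus b, spconst 1) a \<longleftrightarrow>
            b \<notin> sd_class \<sigma> \<delta> a \<and>
            (\<forall>c\<in>sd_class \<sigma> \<delta> a. \<exists>x. \<sigma> x * c + \<delta> x - b * x = 1))
       \<and> (rf_defined_at \<sigma> \<delta> (spTminus b, spconst 1) a \<longrightarrow>
            (\<exists>!x. \<sigma> x * a + \<delta> x - b * x = 1) \<and>
            \<sigma> (rf_value \<sigma> \<delta> (spTminus b, spconst 1) a) * a + \<delta> (rf_value \<sigma> \<delta> (spTminus b, spconst 1) a)
              - b * rf_value \<sigma> \<delta> (spTminus b, spconst 1) a = 1)"
proof -
  interpret sdctx \<sigma> \<delta> by (rule sdctx.intro) (rule assms)+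
  have sF: "speval \<sigma> \<delta> (fst (min_rep \<sigma> \<delta> (spTminus b, spconst 1))) = (\<lambda>c. c - b)"
    unfolding min_rep_eq by (simp add: speval_Tm fun_eq_iff)
  have sG: "speval \<sigma> \<delta> (snd (min_rep \<sigma> \<delta> (spTminus b, spconst 1))) = (\<lambda>_. 1)"
    unfolding min_rep_eq by (simp add: speval_one fun_eq_iff)
  have D: "rf_defined_at \<sigma> \<delta> (spTminus b, spconst 1) a \<longleftrightarrow>
      skew_invertible_on \<sigma> \<delta> (sd_class \<sigma> \<delta> a) (\<lambda>c. c - b)"
    unfolding rf_defined_at_def sF ..
  have V: "rf_value \<sigma> \<delta> (spTminus b, spconst 1) a = skew_inv \<sigma> \<delta> (sd_class \<sigma> \<delta> a) (\<lambda>c. c - b) a"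
    unfolding rf_value_def sF sG by (simp add: skew_prod_def act_one)
  show ?thesis
  proof (intro conjI impI)
    show "rf_defined_at \<sigma> \<delta> (spTminus b, spconst 1) a \<longleftrightarrow>
            b \<notin> sd_class \<sigma> \<delta> a \<and> (\<forall>c\<in>sd_class \<sigma> \<delta> a. \<exists>x. \<sigma> x * c + \<delta> x - b * x = 1)"
      unfolding D by (rule inv_iff)
  next
    assume r: "rf_defined_at \<sigma> \<delta> (spTminus b, spconst 1) a"
    then have i: "b \<notin> sd_class \<sigma> \<delta> a \<and> (\<forall>c\<in>sd_class \<sigma> \<delta> a. \<exists>x. \<sigma> x * c + \<delta> x - b * x = 1)"
      unfolding D inv_iff .
    then obtain x where x: "\<sigma> x * a + \<delta> x - b * x = 1" using in_cls_self by blast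
    show "\<exists>!x. \<sigma> x * a + \<delta> x - b * x = 1"
    proof (rule ex1I[of _ x])
      show "\<sigma> x * a + \<delta> x - b * x = 1" by (rule x)
      fix y assume "\<sigma> y * a + \<delta> y - b * y = 1"
      then show "y = x" using eq_unique[OF _ in_cls_self _ x] i by blast
    qed
  next
    assume r: "rf_defined_at \<sigma> \<delta> (spTminus b, spconst 1) a"
    show "\<sigma> (rf_value \<sigma> \<delta> (spTminus b, spconst 1) a) * a + \<delta> (rf_value \<sigma> \<delta> (spTminus b, spconst 1) a)
              - b * rf_value \<sigma> \<delta> (spTminus b, spconst 1) a = 1"
      unfolding V using inv_value r D by blast
  qed
qed

end
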